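(* For $n=4$ (so $d_4=\frac{\sqrt5}{3}$), $$\lim_{h\to\sqrt5/3}\tilde B_4(h)=\frac{5\left(2\sqrt3+\ln(26-15\sqrt3)\right)}{4\ln(2-\sqrt3)},$$ and consequently $c_0(h)=\frac{1}{1-\tilde B_4(h)}$ satisfies $$\lim_{h\to\sqrt5/3}c_0(h)=\frac{1}{1-\frac{5\left(2\sqrt3+\ln(26-15\sqrt3)\right)}{4\ln(2-\sqrt3)}} .$$
   Context: For $n=4$: $W(u)=\frac{u^2}{2}-\frac{u^6}{30}$, $H(u,v)=\frac{v^2}{2}+W(u)$; for $h\in(0,\frac{\sqrt5}{3})$, $\Gamma_h$ is the periodic orbit in $\{H=h\}$ surrounding the origin of $u'=v$, $v'=-u+\frac15u^5$, oriented clockwise; $\tilde B_4(h)=\oint_{\Gamma_h}u^4v\,du\big/\oint_{\Gamma_h}v\,du$. *)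

theory Defs
  imports "HOL-Analysis.Analysis"
begin

definition W4 :: "real \<Rightarrow> real" where
  "W4 u = u^2/2 - u^6/30"

definition H4 :: "real \<Rightarrow> real \<Rightarrow> real" where
  "H4 u v = v^2/2 + W4 u"

text \<open>The periodic orbit Gamma_h surrounding the origin: the oval of the level set
  {H = h} lying in the strip |u| < 5^(1/4) (the saddles are at u = +-5^(1/4)).\<close>
definition Gamma4 :: "real \<Rightarrow> (real \<times> real) set" where
  "Gamma4 h = {(u, v). H4 u v = h \<and> \<bar>u\<bar> < root 4 5}"

definition amp4 :: "real \<Rightarrow> real" where
  "amp4 h = (THE a. 0 < a \<and> a < root 4 5 \<and> W4 a = h)"

definition vup4 :: "real \<Rightarrow> real \<Rightarrow> real" where
  "vup4 h u = sqrt (2 * (h - W4 u))"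

text \<open>Oriented line integral of P(u,v) du along Gamma_h traversed clockwise
  (the direction of the flow u' = v): the upper branch is run from u = -a to u = a,
  the lower branch from u = a back to u = -a.\<close>
definition loop_int4 :: "(real \<Rightarrow> real \<Rightarrow> real) \<Rightarrow> real \<Rightarrow> real" where
  "loop_int4 P h =
     integral {-amp4 h..amp4 h} (\<lambda>u. P u (vup4 h u))
     - integral {-amp4 h..amp4 h} (\<lambda>u. P u (- vup4 h u))"

definition B4t :: "real \<Rightarrow> real" where
  "B4t h = loop_int4 (\<lambda>u v. u^4 * v) h / loop_int4 (\<lambda>u v. v) h"

definition c0 :: "real \<Rightarrow> real" where
  "c0 h = 1 / (1 - B4t h)"

end

theory Submission imports Defs begin

lemma antideriv:
  fixes c k :: real and p p' q :: "real \<Rightarrow> real"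
  assumes c: "c > 0"
    and id: "p' u * (u\<^sup>2 + c) + p u * u + k = q u * (u\<^sup>2 + c)"
    and dp: "(p has_real_derivative p' u) (at u)"
  shows "((\<lambda>u. p u * sqrt (u\<^sup>2 + c) + k * ln (u + sqrt (u\<^sup>2 + c)))
           has_real_derivative q u * sqrt (u\<^sup>2 + c)) (at u)"
proof -
  define S where "S = sqrt (u\<^sup>2 + c)"
  have pos: "u\<^sup>2 + c > 0" using c by (simp add: add_nonneg_pos)
  have S0: "S > 0" unfolding S_def using pos by simp
  have S2: "S\<^sup>2 = u\<^sup>2 + c" unfolding S_def using pos by simp
  have Sgt: "S > \<bar>u\<bar>" unfolding S_def using c
    by (metis abs_ge_zero add.commute less_add_same_cancel2 real_sqrt_abs real_sqrt_less_mono)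
  have uS: "u + S > 0" using Sgt by linarith
  have dS: "((\<lambda>u. sqrt (u\<^sup>2 + c)) has_real_derivative u / S) (at u)"
    using pos unfolding S_def
    by (auto intro!: derivative_eq_intros simp: field_simps)
  have dL: "((\<lambda>u. ln (u + sqrt (u\<^sup>2 + c))) has_real_derivative 1 / S) (at u)"
  proof -
    have uS': "0 < u + sqrt (u\<^sup>2 + c)" using uS unfolding S_def .
    have "((\<lambda>u. ln (u + sqrt (u\<^sup>2 + c))) has_real_derivative 1 / (u + sqrt (u\<^sup>2 + c)) * (1 + u / S)) (at u)"
      by (rule DERIV_chain2[OF DERIV_ln_divide[OF uS'] DERIV_add[OF DERIV_ident dS]])
    then have "((\<lambda>u. ln (u + sqrt (u\<^sup>2 + c))) has_real_derivative (1 + u / S) / (u + S)) (at u)"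
      unfolding S_def by simp
    moreover have "(1 + u / S) / (u + S) = 1 / S"
    proof -
      have "1 + u / S = (u + S) / S" using S0 by (simp add: field_simps)
      thus ?thesis using S0 uS by simp
    qed
    ultimately show ?thesis by simp
  qed
  have D: "((\<lambda>u. p u * sqrt (u\<^sup>2 + c) + k * ln (u + sqrt (u\<^sup>2 + c)))
           has_real_derivative p' u * S + p u * (u / S) + k * (1 / S)) (at u)"
    using DERIV_add[OF DERIV_mult[OF dp dS] DERIV_cmult[OF dL, of k]] unfolding S_def
    by (simp add: mult.commute)
  have "p' u * S + p u * (u / S) + k * (1 / S) = (p' u * S\<^sup>2 + p u * u + k) / S"
    using S0 by (simp add: field_simps power2_eq_square)
  also have "\<dots> = q u * S\<^sup>2 / S" using id S2 by simp
  also have "\<dots> = q u * S" using S0 by (simp add: power2_eq_square)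
  finally show ?thesis using D unfolding S_def by simp
qed

definition p0 :: "real \<Rightarrow> real \<Rightarrow> real \<Rightarrow> real" where
  "p0 s c u = s*u/2 - u*(2*u^2+c)/8"
definition p4 :: "real \<Rightarrow> real \<Rightarrow> real \<Rightarrow> real" where
  "p4 s c u = s*u^5/6 + s*c*u^3/24 - s*c^2*u/16 - u^7/8 - c*u^5/48 + 5*c^2*u^3/192 - 5*c^3*u/128"

definition q4 :: "real \<Rightarrow> real \<Rightarrow> real \<Rightarrow> real" where
  "q4 s c u = 5 * s * u^4/6 + s*c*u^2/8 - s*c^2/16 - 7*u^6/8 - 5*c*u^4/48 + 5*c^2*u^2/64 - 5*c^3/128"

lemma q4_id: "q4 s c u * (u\<^sup>2 + c) + p4 s c u * u + (s*c^3/16 + 5*c^4/128) = (u^4 * (s - u^2)) * (u\<^sup>2 + c)"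
  unfolding q4_def p4_def by (simp add: field_simps) algebra

lemma F0_deriv:
  assumes "c > 0"
  shows "((\<lambda>u. p0 s c u * sqrt (u\<^sup>2 + c) + (s*c/2 + c^2/8) * ln (u + sqrt (u\<^sup>2 + c)))
           has_real_derivative (s - u^2) * sqrt (u\<^sup>2 + c)) (at u)"
  apply (rule antideriv[where p' = "\<lambda>u. s/2 - (6*u^2+c)/8"])
    apply (rule assms)
   apply (unfold p0_def, simp add: field_simps, algebra)
  unfolding p0_def by (auto intro!: derivative_eq_intros simp: algebra_simps power2_eq_square)

lemma F4_deriv:
  assumes "c > 0"
  shows "((\<lambda>u. p4 s c u * sqrt (u\<^sup>2 + c) + (s*c^3/16 + 5*c^4/128) * ln (u + sqrt (u\<^sup>2 + c)))
           has_real_derivative (u^4 * (s - u^2)) * sqrt (u\<^sup>2 + c)) (at u)"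
  apply (rule antideriv[where p' = "q4 s c"])
    apply (rule assms)
   apply (rule q4_id)
  unfolding p4_def q4_def
  by (auto intro!: derivative_eq_intros simp: algebra_simps)

lemma r4: "root 4 5 ^ 4 = (5::real)" by (simp add: real_root_pow_pos2)
lemma r2: "root 4 5 ^ 2 = sqrt (5::real)"
proof -
  have "(root 4 5 ^ 2)^2 = (5::real)" using r4 by (simp flip: power_mult)
  thus ?thesis by (intro real_sqrt_unique[symmetric]) auto
qed
lemma rpos: "root 4 5 > (0::real)" by simp

lemma W_abs: "W4 \<bar>u\<bar> = W4 u"
  by (cases "u \<ge> 0") (simp_all add: W4_def)

lemma W_mono:
  assumes "0 \<le> x" "x < y" "y \<le> root 4 5"
  shows "W4 x < W4 y"
proof -
  have y4: "y^4 \<le> 5" using power_mono[OF assms(3), of 4] assms r4 by simp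
  have x4: "x^4 < y^4" using power_strict_mono[OF assms(2) assms(1), of 4] by simp
  have xy: "x^2*y^2 < y^4"
  proof -
    have "x^2 < y^2" using power_strict_mono[OF assms(2) assms(1), of 2] by simp
    moreover have "y^2 > 0" using assms by simp
    ultimately have "x^2*y^2 < y^2*y^2" by (rule mult_strict_right_mono)
    moreover have "y^2*y^2 = y^4" by (simp add: eval_nat_numeral)
    ultimately show ?thesis by simp
  qed
  have e: "W4 y - W4 x = (y^2-x^2)*(15 - (y^4 + x^2*y^2 + x^4))/30"
    unfolding W4_def by (simp add: field_simps eval_nat_numeral)
  have "y^2 - x^2 > 0" using power_strict_mono[OF assms(2) assms(1), of 2] by simp
  moreover have "15 - (y^4 + x^2*y^2 + x^4) > 0" using y4 x4 xy by linarith
  ultimately have "W4 y - W4 x > 0" unfolding e by simp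
  thus ?thesis by simp
qed

lemma W_r: "W4 (root 4 5) = sqrt 5 / 3"
proof -
  have "root 4 5 ^ 6 = (5::real) * root 4 5 ^ 2"
  proof -
    have "root 4 5 ^ 6 = (root 4 5::real) ^ (4+2)" by simp
    also have "\<dots> = root 4 5 ^ 4 * (root 4 5 ^ 2::real)" by (rule power_add)
    finally have "root 4 5 ^ 6 = root 4 5 ^ 4 * (root 4 5 ^ 2::real)" .
    thus ?thesis using r4 by simp
  qed
  thus ?thesis unfolding W4_def r2[symmetric] by simp
qed

lemma amp:
  assumes "0 < h" "h < sqrt 5 / 3"
  shows "0 < amp4 h \<and> amp4 h < root 4 5 \<and> W4 (amp4 h) = h"
proof -
  have cont: "continuous_on {0..root 4 5} W4" unfolding W4_def by (intro continuous_intros) auto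
  obtain a where a: "0 \<le> a" "a \<le> root 4 5" "W4 a = h"
    using IVT'[of W4 0 h "root 4 5", OF _ _ _ cont] assms W_r by (auto simp: W4_def)
  have a0: "a \<noteq> 0" using a assms by (auto simp: W4_def)
  have ar: "a \<noteq> root 4 5" using a assms W_r by auto
  have P: "0 < a \<and> a < root 4 5 \<and> W4 a = h" using a a0 ar by auto
  have uniq: "b = a" if "0 < b \<and> b < root 4 5 \<and> W4 b = h" for b
  proof (rule ccontr)
    assume "b \<noteq> a"
    then consider "b < a" | "a < b" by linarith
    thus False
    proof cases
      case 1 thus False using W_mono[of b a] that P by auto
    next
      case 2 thus False using W_mono[of a b] that P by auto
    qed
  qed
  have "amp4 h = a" unfolding amp4_def using P uniq by (rule the_equality)
  thus ?thesis using P by simp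
qed

lemma below:
  assumes "0 < h" "h < sqrt 5 / 3" "\<bar>u\<bar> \<le> amp4 h"
  shows "W4 u \<le> h"
proof -
  note A = amp[OF assms(1,2)]
  show ?thesis
  proof (cases "\<bar>u\<bar> = amp4 h")
    case True thus ?thesis using A W_abs[of u] by simp
  next
    case False
    hence "W4 \<bar>u\<bar> < W4 (amp4 h)" using W_mono[of "\<bar>u\<bar>" "amp4 h"] A assms(3) by simp
    thus ?thesis using A W_abs[of u] by simp
  qed
qed

lemma above:
  assumes "0 < h" "h < sqrt 5 / 3" "amp4 h \<le> \<bar>u\<bar>" "\<bar>u\<bar> \<le> root 4 5"
  shows "h \<le> W4 u"
proof -
  note A = amp[OF assms(1,2)]
  show ?thesis
  proof (cases "\<bar>u\<bar> = amp4 h")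
    case True thus ?thesis using A W_abs[of u] by simp
  next
    case False
    hence "W4 (amp4 h) < W4 \<bar>u\<bar>" using W_mono[of "amp4 h" "\<bar>u\<bar>"] A assms by simp
    thus ?thesis using A W_abs[of u] by simp
  qed
qed


definition Ig :: "(real \<Rightarrow> real) \<Rightarrow> real \<Rightarrow> real" where
  "Ig g h = integral {-root 4 5..root 4 5} (\<lambda>u. g u * sqrt (2 * max 0 (h - W4 u)))"

lemma contF: assumes g: "continuous_on UNIV g" shows "continuous_on S (\<lambda>u. g u * sqrt (2 * max 0 (h - W4 u)))"
proof -
  have "continuous_on UNIV (\<lambda>u. g u * sqrt (2 * max 0 (h - W4 u)))"
    unfolding W4_def by (intro continuous_intros g) auto
  thus ?thesis by (rule continuous_on_subset) simp
qed

lemma loop_eq: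
  assumes g: "continuous_on UNIV g" and h: "0 < h" "h < sqrt 5 / 3"
  shows "loop_int4 (\<lambda>u v. g u * v) h = 2 * Ig g h"
proof -
  define a where "a = amp4 h"
  define r where "r = (root 4 5 :: real)"
  define F where "F = (\<lambda>u. g u * sqrt (2 * max 0 (h - W4 u)))"
  have A: "0 < a" "a < r" "W4 a = h" using amp[OF h] unfolding a_def r_def by auto
  have eq1: "g u * vup4 h u = F u" if "u \<in> {-a..a}" for u
  proof -
    have "W4 u \<le> h" using below[OF h, of u] that unfolding a_def by auto
    thus ?thesis unfolding F_def vup4_def by simp
  qed
  have int1: "integral {-a..a} (\<lambda>u. g u * vup4 h u) = integral {-a..a} F"
    by (rule integral_cong) (rule eq1)
  have L: "loop_int4 (\<lambda>u v. g u * v) h = 2 * integral {-a..a} F"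
    unfolding loop_int4_def a_def[symmetric] using int1 by simp
  have "(F has_integral integral {-a..a} F) {-a..a}"
    using integrable_continuous_interval[OF contF[OF g]] unfolding F_def by blast
  hence "((\<lambda>x. if x \<in> {-a..a} then F x else 0) has_integral integral {-a..a} F) {-r..r}"
    using A by (subst has_integral_restrict) auto
  moreover have "(if x \<in> {-a..a} then F x else 0) = F x" if "x \<in> {-r..r}" for x
  proof (cases "x \<in> {-a..a}")
    case False
    hence "h \<le> W4 x" using above[OF h, of x] that unfolding a_def r_def by auto
    thus ?thesis using False unfolding F_def by simp
  qed simp
  ultimately have "(F has_integral integral {-a..a} F) {-r..r}"
    using has_integral_cong[of "{-r..r}" "\<lambda>x. if x \<in> {-a..a} then F x else 0" F] by blast
  hence "integral {-r..r} F = integral {-a..a} F" by blast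
  thus ?thesis using L unfolding Ig_def F_def r_def by simp
qed

lemma sqrt_diff_le: "0 \<le> A \<Longrightarrow> 0 \<le> B \<Longrightarrow> \<bar>sqrt A - sqrt B\<bar> \<le> sqrt \<bar>A - B\<bar>"
proof -
  have *: "sqrt A - sqrt B \<le> sqrt \<bar>A - B\<bar>" if "0 \<le> A" "0 \<le> B" for A B :: real
  proof (cases "B \<le> A")
    case True
    have "sqrt A = sqrt (B + (A - B))" by simp
    also have "\<dots> \<le> sqrt B + sqrt (A - B)" using True that by (intro sqrt_add_le_add_sqrt) auto
    finally show ?thesis using True by simp
  next
    case False
    hence "sqrt A \<le> sqrt B" by simp
    thus ?thesis by (smt (verit) real_sqrt_ge_zero abs_ge_zero)
  qed
  assume "0 \<le> A" "0 \<le> B"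
  thus ?thesis using *[of A B] *[of B A] by (simp add: abs_minus_commute)
qed

lemma Ig_lim:
  assumes g: "continuous_on UNIV g"
  shows "(Ig g \<longlongrightarrow> Ig g (sqrt 5 / 3)) (at_left (sqrt 5 / 3))"
proof -
  define d where "d = sqrt 5 / (3::real)"
  define r where "r = (root 4 5 :: real)"
  define M where "M = integral {-r..r} (\<lambda>u. \<bar>g u\<bar>)"
  have bound: "norm (Ig g h - Ig g d) \<le> M * sqrt (2 * \<bar>h - d\<bar>)" for h
  proof -
    let ?F = "\<lambda>h u. g u * sqrt (2 * max 0 (h - W4 u))"
    have iF: "?F h' integrable_on {-r..r}" for h'
      by (rule integrable_continuous_interval[OF contF[OF g]])
    have ig: "(\<lambda>u. \<bar>g u\<bar> * sqrt (2 * \<bar>h - d\<bar>)) integrable_on {-r..r}"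
    proof -
      have "continuous_on UNIV (\<lambda>u. \<bar>g u\<bar> * sqrt (2 * \<bar>h - d\<bar>))" by (intro continuous_intros g)
      thus ?thesis by (intro integrable_continuous_interval) (rule continuous_on_subset, auto)
    qed
    have e: "Ig g h - Ig g d = integral {-r..r} (\<lambda>u. ?F h u - ?F d u)"
      unfolding Ig_def r_def[symmetric] by (rule integral_diff[symmetric]) (rule iF)+
    have n: "norm (integral {-r..r} (\<lambda>u. ?F h u - ?F d u)) \<le> integral {-r..r} (\<lambda>u. \<bar>g u\<bar> * sqrt (2 * \<bar>h - d\<bar>))"
    proof (rule integral_norm_bound_integral)
      show "(\<lambda>u. ?F h u - ?F d u) integrable_on {-r..r}" by (rule integrable_diff[OF iF iF])
      show "(\<lambda>u. \<bar>g u\<bar> * sqrt (2 * \<bar>h - d\<bar>)) integrable_on {-r..r}" by (rule ig)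
    next
      fix u
      have "\<bar>sqrt (2 * max 0 (h - W4 u)) - sqrt (2 * max 0 (d - W4 u))\<bar>
              \<le> sqrt \<bar>2 * max 0 (h - W4 u) - 2 * max 0 (d - W4 u)\<bar>"
        by (rule sqrt_diff_le) auto
      also have "\<dots> \<le> sqrt (2 * \<bar>h - d\<bar>)" by (intro real_sqrt_le_mono) (simp add: max_def abs_if)
      finally have "\<bar>sqrt (2 * max 0 (h - W4 u)) - sqrt (2 * max 0 (d - W4 u))\<bar> \<le> sqrt (2 * \<bar>h - d\<bar>)" .
      hence "\<bar>g u\<bar> * \<bar>sqrt (2 * max 0 (h - W4 u)) - sqrt (2 * max 0 (d - W4 u))\<bar> \<le> \<bar>g u\<bar> * sqrt (2 * \<bar>h - d\<bar>)"
        by (rule mult_left_mono) simp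
      thus "norm (?F h u - ?F d u) \<le> \<bar>g u\<bar> * sqrt (2 * \<bar>h - d\<bar>)"
        by (simp add: abs_mult right_diff_distrib[symmetric])
    qed
    have "integral {-r..r} (\<lambda>u. \<bar>g u\<bar> * sqrt (2 * \<bar>h - d\<bar>)) = M * sqrt (2 * \<bar>h - d\<bar>)"
      unfolding M_def by (rule integral_mult_left)
    thus ?thesis using e n unfolding M_def by simp
  qed
  have "((\<lambda>h. M * sqrt (2 * \<bar>h - d\<bar>)) \<longlongrightarrow> M * sqrt (2 * \<bar>d - d\<bar>)) (at_left d)"
    by (intro tendsto_intros)
  hence "((\<lambda>h. M * sqrt (2 * \<bar>h - d\<bar>)) \<longlongrightarrow> 0) (at_left d)" by simp
  hence "((\<lambda>h. Ig g h - Ig g d) \<longlongrightarrow> 0) (at_left d)"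
    by (rule Lim_null_comparison[OF always_eventually[OF allI[OF bound]]])
  hence "(Ig g \<longlongrightarrow> Ig g d) (at_left d)" by (simp add: LIM_zero_iff)
  thus ?thesis unfolding d_def .
qed


lemma sq3: "sqrt (r\<^sup>2 + 2 * r\<^sup>2) = sqrt 3 * r" if "r > 0" for r :: real
proof -
  have "r\<^sup>2 + 2 * r\<^sup>2 = 3 * r\<^sup>2" by simp
  thus ?thesis using that by (simp add: real_sqrt_mult)
qed

lemma Lam:
  fixes r :: real assumes r: "r > 0"
  shows "ln (r + sqrt (r\<^sup>2 + 2 * r\<^sup>2)) - ln (- r + sqrt (r\<^sup>2 + 2 * r\<^sup>2)) = ln (2 + sqrt 3)"
proof -
  have s3: "sqrt 3 > (1::real)" by simp
  have "r + sqrt 3 * r = (1 + sqrt 3) * r" "- r + sqrt 3 * r = (sqrt 3 - 1) * r" by (simp_all add: algebra_simps)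
  hence "ln (r + sqrt 3 * r) - ln (- r + sqrt 3 * r) = ln ((1 + sqrt 3) * r) - ln ((sqrt 3 - 1) * r)" by simp
  also have "\<dots> = ln ((1 + sqrt 3) * r / ((sqrt 3 - 1) * r))"
  proof -
    have pos1: "(1 + sqrt 3) * r > 0" "(sqrt 3 - 1) * r > 0" using r s3 by (simp_all add: add_pos_nonneg)
    have cc: "(1 + sqrt 3) * r \<noteq> 0 \<and> (sqrt 3 - 1) * r \<noteq> 0" using pos1 by linarith
    show ?thesis using ln_div[of "(1 + sqrt 3) * r" "(sqrt 3 - 1) * r"] by (simp only: if_P[OF cc])
  qed
  also have "(1 + sqrt 3) * r / ((sqrt 3 - 1) * r) = 2 + sqrt 3"
  proof -
    have "(2 + sqrt 3) * (sqrt 3 - 1) = 1 + sqrt 3" by (simp add: algebra_simps)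
    hence "(1 + sqrt 3) * r = (2 + sqrt 3) * ((sqrt 3 - 1) * r)" by (simp add: mult.assoc[symmetric])
    moreover have "(sqrt 3 - 1) * r \<noteq> 0" using r s3 by simp
    ultimately show ?thesis by simp
  qed
  finally show ?thesis using sq3[OF r] by simp
qed

lemma FTC_real:
  fixes F f :: "real \<Rightarrow> real"
  assumes "a \<le> b" "\<And>u. (F has_real_derivative f u) (at u)"
  shows "(f has_integral (F b - F a)) {a..b}"
  by (rule fundamental_theorem_of_calculus[OF assms(1)])
     (use assms(2) in \<open>auto simp: has_real_derivative_iff_has_vector_derivative intro: has_vector_derivative_at_within\<close>)

lemma J0gen:
  fixes r :: real assumes r: "r > 0"
  shows "((\<lambda>u. (r\<^sup>2 - u\<^sup>2) * sqrt (u\<^sup>2 + 2*r\<^sup>2)) has_integral (3/2 * r^4) * ln (2 + sqrt 3)) {-r..r}"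
proof -
  define F where "F = (\<lambda>u. p0 (r\<^sup>2) (2*r\<^sup>2) u * sqrt (u\<^sup>2 + 2*r\<^sup>2) + (r\<^sup>2*(2*r\<^sup>2)/2 + (2*r\<^sup>2)^2/8) * ln (u + sqrt (u\<^sup>2 + 2*r\<^sup>2)))"
  have c: "2 * r\<^sup>2 > 0" using r by simp
  have "((\<lambda>u. (r\<^sup>2 - u\<^sup>2) * sqrt (u\<^sup>2 + 2*r\<^sup>2)) has_integral (F r - F (-r))) {-r..r}"
    using r unfolding F_def by (intro FTC_real F0_deriv[OF c]) auto
  moreover have "F r - F (-r) = (3/2 * r^4) * ln (2 + sqrt 3)"
  proof -
    have "p0 (r\<^sup>2) (2*r\<^sup>2) r = 0" "p0 (r\<^sup>2) (2*r\<^sup>2) (-r) = 0" unfolding p0_def by (simp_all add: field_simps power2_eq_square power3_eq_cube)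
    moreover have "r\<^sup>2*(2*r\<^sup>2)/2 + (2*r\<^sup>2)^2/8 = 3/2 * r^4" by (simp add: field_simps eval_nat_numeral)
    ultimately have "F r - F (-r) = 3/2 * r^4 * (ln (r + sqrt (r\<^sup>2 + 2 * r\<^sup>2)) - ln (- r + sqrt (r\<^sup>2 + 2 * r\<^sup>2)))"
      unfolding F_def by (simp add: algebra_simps)
    thus ?thesis using Lam[OF r] by simp
  qed
  ultimately show ?thesis by simp
qed

lemma J4gen:
  fixes r :: real assumes r: "r > 0"
  shows "((\<lambda>u. (u^4 * (r\<^sup>2 - u\<^sup>2)) * sqrt (u\<^sup>2 + 2*r\<^sup>2)) has_integral (- (3/4) * sqrt 3 * r^8 + 9/8 * r^8 * ln (2 + sqrt 3))) {-r..r}"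
proof -
  define F where "F = (\<lambda>u. p4 (r\<^sup>2) (2*r\<^sup>2) u * sqrt (u\<^sup>2 + 2*r\<^sup>2) + (r\<^sup>2*(2*r\<^sup>2)^3/16 + 5*(2*r\<^sup>2)^4/128) * ln (u + sqrt (u\<^sup>2 + 2*r\<^sup>2)))"
  have c: "2 * r\<^sup>2 > 0" using r by simp
  have "((\<lambda>u. (u^4 * (r\<^sup>2 - u\<^sup>2)) * sqrt (u\<^sup>2 + 2*r\<^sup>2)) has_integral (F r - F (-r))) {-r..r}"
    using r unfolding F_def by (intro FTC_real F4_deriv[OF c]) auto
  moreover have "F r - F (-r) = - (3/4) * sqrt 3 * r^8 + 9/8 * r^8 * ln (2 + sqrt 3)"
  proof -
    have "p4 (r\<^sup>2) (2*r\<^sup>2) r = - 3/8 * r^7" "p4 (r\<^sup>2) (2*r\<^sup>2) (-r) = 3/8 * r^7"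
      unfolding p4_def by (simp_all add: field_simps eval_nat_numeral)
    moreover have "r\<^sup>2*(2*r\<^sup>2)^3/16 + 5*(2*r\<^sup>2)^4/128 = 9/8 * r^8" by (simp add: field_simps eval_nat_numeral)
    moreover have "sqrt (r\<^sup>2 + 2 * r\<^sup>2) = sqrt 3 * r" by (rule sq3[OF r])
    ultimately have "F r - F (-r) = - (3/4) * sqrt 3 * r^8 + 9/8 * r^8 * (ln (r + sqrt (r\<^sup>2 + 2 * r\<^sup>2)) - ln (- r + sqrt (r\<^sup>2 + 2 * r\<^sup>2)))"
      unfolding F_def by (simp add: algebra_simps eval_nat_numeral)
    thus ?thesis using Lam[OF r] by simp
  qed
  ultimately show ?thesis by simp
qed


lemma Ig_d:
  assumes g: "continuous_on UNIV g"
  shows "Ig g (sqrt 5 / 3) = integral {-root 4 5..root 4 5}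
     (\<lambda>u. g u * (((root 4 5)\<^sup>2 - u\<^sup>2) * sqrt (u\<^sup>2 + 2*(root 4 5)\<^sup>2))) * (1 / sqrt 15)"
proof -
  define r where "r = (root 4 5 :: real)"
  have r4': "r^4 = 5" unfolding r_def by (rule r4)
  have r2': "r\<^sup>2 = sqrt 5" unfolding r_def by (rule r2)
  have rp: "r > 0" unfolding r_def by simp
  have pt: "g u * sqrt (2 * max 0 (sqrt 5 / 3 - W4 u)) = g u * ((r\<^sup>2 - u\<^sup>2) * sqrt (u\<^sup>2 + 2*r\<^sup>2)) * (1 / sqrt 15)"
    if u: "u \<in> {-r..r}" for u
  proof -
    have "\<bar>u\<bar> \<le> r" using u by auto
    hence "\<bar>u\<bar>^2 \<le> r^2" by (rule power_mono) simp
    hence ur: "u\<^sup>2 \<le> r\<^sup>2" by simp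
    have e1: "(r\<^sup>2 - u\<^sup>2)\<^sup>2 * (u\<^sup>2 + 2*r\<^sup>2) = u^6 - 3 * r^4 * u\<^sup>2 + 2 * r^4 * r\<^sup>2"
      by (simp add: algebra_simps eval_nat_numeral)
    have key: "2 * (sqrt 5 / 3 - W4 u) = (r\<^sup>2 - u\<^sup>2)\<^sup>2 * (u\<^sup>2 + 2*r\<^sup>2) / 15"
      unfolding e1 r4' W4_def r2'[symmetric] by (simp add: field_simps)
    have nn: "0 \<le> (r\<^sup>2 - u\<^sup>2)\<^sup>2 * (u\<^sup>2 + 2*r\<^sup>2) / 15" by simp
    have "2 * max 0 (sqrt 5 / 3 - W4 u) = (r\<^sup>2 - u\<^sup>2)\<^sup>2 * (u\<^sup>2 + 2*r\<^sup>2) / 15"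
    proof -
      have "0 \<le> 2 * (sqrt 5 / 3 - W4 u)" using nn by (simp only: key)
      hence "sqrt 5 / 3 - W4 u \<ge> 0" by simp
      thus ?thesis using key by (simp add: max_def)
    qed
    hence "sqrt (2 * max 0 (sqrt 5 / 3 - W4 u)) = sqrt ((r\<^sup>2 - u\<^sup>2)\<^sup>2 * (u\<^sup>2 + 2*r\<^sup>2) / 15)"
      by (simp only:)
    also have "\<dots> = \<bar>r\<^sup>2 - u\<^sup>2\<bar> * sqrt (u\<^sup>2 + 2*r\<^sup>2) / sqrt 15"
      by (simp only: real_sqrt_divide real_sqrt_mult real_sqrt_abs)
    also have "\<dots> = (r\<^sup>2 - u\<^sup>2) * sqrt (u\<^sup>2 + 2*r\<^sup>2) * (1 / sqrt 15)" using ur by simp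
    finally show ?thesis by simp
  qed
  have "Ig g (sqrt 5 / 3) = integral {-r..r} (\<lambda>u. g u * ((r\<^sup>2 - u\<^sup>2) * sqrt (u\<^sup>2 + 2*r\<^sup>2)) * (1 / sqrt 15))"
    unfolding Ig_def r_def[symmetric] by (rule integral_cong) (rule pt)
  also have "\<dots> = integral {-r..r} (\<lambda>u. g u * ((r\<^sup>2 - u\<^sup>2) * sqrt (u\<^sup>2 + 2*r\<^sup>2))) * (1 / sqrt 15)"
    by (rule integral_mult_left)
  finally show ?thesis unfolding r_def .
qed

lemma Lam_pos: "ln (2 + sqrt 3) > (0::real)"
  by (rule ln_gt_zero) (use real_sqrt_ge_zero[of 3] in linarith)

lemma Lam_small: "ln (2 + sqrt 3) < (3/2::real)"
proof -
  have s: "sqrt 3 < (7/4::real)"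
    by (rule power2_less_imp_less) (simp_all add: power2_eq_square)
  have "(2 + sqrt 3) < (1 + (3/2) / real 8) ^ 8" using s by (simp add: power_divide)
  also have "\<dots> \<le> exp (3/2)" by (rule exp_ge_one_plus_x_over_n_power_n) auto
  finally have "2 + sqrt 3 < exp (3/2::real)" .
  moreover have "0 < 2 + sqrt (3::real)" using real_sqrt_ge_zero[of 3] by linarith
  ultimately have "ln (2 + sqrt 3) < ln (exp (3/2::real))" by (subst ln_less_cancel_iff) auto
  thus ?thesis by simp
qed

lemma s3_big: "sqrt 3 > (33/20::real)"
  by (rule power2_less_imp_less) (simp_all add: power2_eq_square)


lemma ln_facts:
  shows "ln (2 - sqrt 3) = - ln (2 + sqrt (3::real))"
    and "ln (26 - 15 * sqrt 3) = - 3 * ln (2 + sqrt (3::real))"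
proof -
  have q: "sqrt 3 * sqrt 3 = (3::real)" by simp
  have "(2 + sqrt 3) * (2 - sqrt 3) = (1::real)" by (simp add: algebra_simps q)
  hence i: "inverse (2 + sqrt 3) = 2 - sqrt (3::real)" by (rule inverse_unique)
  show l1: "ln (2 - sqrt 3) = - ln (2 + sqrt (3::real))" by (simp flip: i add: ln_inverse)
  have "(2 - sqrt 3) ^ 3 = 8 - 12 * sqrt 3 + 6 * (sqrt 3 * sqrt 3) - (sqrt 3 * sqrt 3) * sqrt (3::real)"
    by (simp add: power3_eq_cube algebra_simps)
  also have "\<dots> = 26 - 15 * sqrt 3" unfolding q by simp
  finally have "ln (26 - 15 * sqrt 3) = ln ((2 - sqrt 3) ^ 3 :: real)" by simp
  also have "\<dots> = 3 * ln (2 - sqrt 3)" by (simp add: ln_realpow)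
  finally show "ln (26 - 15 * sqrt 3) = - 3 * ln (2 + sqrt (3::real))" using l1 by simp
qed

theorem mainTheorem8:
  shows "(B4t \<longlongrightarrow>
            5 * (2 * sqrt 3 + ln (26 - 15 * sqrt 3)) / (4 * ln (2 - sqrt 3)))
           (at_left (sqrt 5 / 3))
       \<and> (c0 \<longlongrightarrow>
            1 / (1 - 5 * (2 * sqrt 3 + ln (26 - 15 * sqrt 3)) / (4 * ln (2 - sqrt 3))))
           (at_left (sqrt 5 / 3))"
proof -
  define d where "d = sqrt 5 / (3::real)"
  define r where "r = (root 4 5::real)"
  define L where "L = ln (2 + sqrt (3::real))"
  define T where "T = 5 * (2 * sqrt 3 + ln (26 - 15 * sqrt 3)) / (4 * ln (2 - sqrt (3::real)))"
  have Lp: "L > 0" unfolding L_def by (rule Lam_pos)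
  have rp: "r > 0" unfolding r_def by simp
  have r4': "r^4 = 5" unfolding r_def by (rule r4)
  have r8: "r^8 = 25"
  proof -
    have "r^8 = (r^4)^2" by (simp flip: power_mult)
    thus ?thesis using r4' by simp
  qed
  have g4: "continuous_on UNIV (\<lambda>u::real. u^4)" by (intro continuous_intros)
  have g1: "continuous_on UNIV (\<lambda>u::real. 1::real)" by (intro continuous_intros)
  have J4: "integral {-r..r} (\<lambda>u. u^4 * ((r\<^sup>2 - u\<^sup>2) * sqrt (u\<^sup>2 + 2*r\<^sup>2))) = - (3/4) * sqrt 3 * r^8 + 9/8 * r^8 * L"
    using integral_unique[OF J4gen[OF rp]] unfolding L_def by (simp add: mult.assoc)
  have J1: "integral {-r..r} (\<lambda>u. 1 * ((r\<^sup>2 - u\<^sup>2) * sqrt (u\<^sup>2 + 2*r\<^sup>2))) = 3/2 * r^4 * L"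
    using integral_unique[OF J0gen[OF rp]] unfolding L_def by simp
  have I4: "Ig (\<lambda>u. u^4) d = (- (3/4) * sqrt 3 * 25 + 9/8 * 25 * L) * (1 / sqrt 15)"
    using Ig_d[OF g4] J4 r8 unfolding d_def r_def by simp
  have I1: "Ig (\<lambda>u. 1) d = (3/2 * 5 * L) * (1 / sqrt 15)"
  proof -
    have e: "Ig (\<lambda>u. 1) d = integral {-r..r} (\<lambda>u. 1 * ((r\<^sup>2 - u\<^sup>2) * sqrt (u\<^sup>2 + 2*r\<^sup>2))) * (1 / sqrt 15)"
      using Ig_d[OF g1] unfolding d_def r_def .
    show ?thesis unfolding e J1 r4' ..
  qed
  have I1nz: "Ig (\<lambda>u. 1) d \<noteq> 0" using I1 Lp by simp
  have TT: "T = 5 * (3 * L - 2 * sqrt 3) / (4 * L)"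
    unfolding T_def ln_facts L_def[symmetric] using Lp by (simp add: field_simps)
  have val: "Ig (\<lambda>u. u^4) d / Ig (\<lambda>u. 1) d = T"
    unfolding I4 I1 TT using Lp by (simp add: field_simps)
  have lim: "((\<lambda>h. Ig (\<lambda>u. u^4) h / Ig (\<lambda>u. 1) h) \<longlongrightarrow> T) (at_left d)"
    unfolding val[symmetric] d_def
    by (rule tendsto_divide[OF Ig_lim[OF g4] Ig_lim[OF g1] I1nz[unfolded d_def]])
  have dp: "d > 0" unfolding d_def by simp
  have ev: "eventually (\<lambda>h. Ig (\<lambda>u. u^4) h / Ig (\<lambda>u. 1) h = B4t h) (at_left d)"
    using eventually_at_left_real[OF dp]
  proof (rule eventually_mono)
    fix h assume h: "h \<in> {0<..<d}"
    hence h1: "0 < h" "h < sqrt 5 / 3" unfolding d_def by auto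
    have a: "loop_int4 (\<lambda>u v. u^4 * v) h = 2 * Ig (\<lambda>u. u^4) h" using loop_eq[OF g4 h1] by simp
    have b: "loop_int4 (\<lambda>u v. v) h = 2 * Ig (\<lambda>u. 1) h" using loop_eq[OF g1 h1] by simp
    show "Ig (\<lambda>u. u^4) h / Ig (\<lambda>u. 1) h = B4t h" unfolding B4t_def a b by simp
  qed
  have limB: "(B4t \<longlongrightarrow> T) (at_left d)" using lim tendsto_cong[OF ev] by simp
  have T1: "1 - T \<noteq> 0"
  proof
    assume "1 - T = 0"
    hence "4 * L = 5 * (3 * L - 2 * sqrt 3)" using Lp unfolding TT by (simp add: field_simps)
    hence "11 * L = 10 * sqrt 3" by simp
    moreover have "L < 3/2" unfolding L_def by (rule Lam_small)
    moreover have "sqrt 3 > (33/20::real)" by (rule s3_big)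
    ultimately show False by linarith
  qed
  have limC: "(c0 \<longlongrightarrow> 1 / (1 - T)) (at_left d)"
  proof -
    have "((\<lambda>h. 1 / (1 - B4t h)) \<longlongrightarrow> 1 / (1 - T)) (at_left d)"
      by (intro tendsto_intros limB T1)
    thus ?thesis unfolding c0_def[abs_def] .
  qed
  show ?thesis using limB limC unfolding T_def d_def by simp
qed

end
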